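(* Let $\beta\in\mathbb{R}\setminus\{0\}$ and let the finite-horizon MDP, the deterministic policy $\mu_\theta$, the soft value functions $V_t,Q_t$, the objective $J^\beta(\mu_\theta)$ and the twisted state densities $\rho^*_t$ be as in the context, under the regularity assumptions (D1)–(D3). Then $$\nabla_\theta J^\beta(\mu_\theta)=\sum_{t=1}^T\int_{\mathcal S}\rho^*_t(s)\,\nabla_\theta\mu_\theta(s)\,\nabla_a Q_t(s,a)\big|_{a=\mu_\theta(s)}\,\mathrm{d}s,$$ where $\nabla_\theta\mu_\theta(s)\in\mathbb{R}^{n\times m}$ is the (transposed) Jacobian of $\theta\mapsto\mu_\theta(s)$. (With $\rho^*_\mu:=\sum_t\rho^*_t$, this is the formula $\int_{\mathcal S}\rho^*_\mu(s)\nabla_\theta\mu_\theta(s)\nabla_aQ(s,a)|_{a=\mu_\theta(s)}ds$ with $Q$ taken at the corresponding time step.)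
   Context: Finite-horizon MDP with horizon $T$: state space $\mathcal S\subset\mathbb{R}^d$ compact, action space $\mathcal A=\mathbb{R}^m$, initial density $p_1(s)$, transition density $p(s'|s,a)$, reward $r(s,a)$. Deterministic policy $\mu_\theta:\mathcal S\to\mathbb{R}^m$, $\theta\in\mathbb{R}^n$. Trajectories: $s_1\sim p_1$, $a_t=\mu_\theta(s_t)$, $s_{t+1}\sim p(\cdot|s_t,a_t)$, $r_t=r(s_t,a_t)$. Objective: $J^\beta(\mu_\theta)=\frac1\beta\log\mathbb{E}[e^{\beta\sum_{t=1}^T r_t}]$. Soft value functions: $V_{T+1}\equiv0$; for $t=T,\dots,1$: $Q_t(s,a)=r(s,a)+\frac1\beta\log\int_{\mathcal S}p(s'|s,a)e^{\beta V_{t+1}(s')}ds'$ (defined for all $a\in\mathbb{R}^m$) and $V_t(s)=Q_t(s,\mu_\theta(s))$; thus $J^\beta(\mu_\theta)=\frac1\beta\log\int p_1(s)e^{\beta V_1(s)}ds$. Twisted quantities: $p_1^*(s)\propto p_1(s)e^{\beta V_1(s)}$; $p^*_t(s'|s,a)\propto p(s'|s,a)e^{\beta V_{t+1}(s')}$. $\rho^*_t$ is the marginal density of $s_t$ for the process $s_1\sim p_1^*$, $a_k=\mu_\theta(s_k)$, $s_{k+1}\sim p^*_k(\cdot|s_k,a_k)$. Regularity assumptions: (D1) $p(s'|s,a)$, $\nabla_ap(s'|s,a)$, $\mu_\theta(s)$, $\nabla_\theta\mu_\theta(s)$, $r(s,a)$, $\nabla_ar(s,a)$, $p_1(s)$ are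 continuous in $s,a,s',\theta$; (D2) there are $b,L$ with $\sup_sp_1(s)<b$, $\sup_{s,a,s'}p(s'|s,a)<b$, $\sup_{s,a}|r(s,a)|<b$, $\sup_{s,a,s'}\|\nabla_ap(s'|s,a)\|<L$, $\sup_{s,a}\|\nabla_ar(s,a)\|<L$; (D3) $\mathcal A=\mathbb{R}^m$ and $\mathcal S$ is compact. *)

theory Defs
  imports "HOL-Analysis.Analysis"
begin

text \<open>State space S (a subset of a Euclidean
space), transition density p s a s' = p(s'|s,a), reward r s a, deterministic
policy mu :: state => action (the policy for a fixed parameter).\<close>

text \<open>Soft value function indexed by the number k of remaining steps:
  Vtg k = V_{T+1-k};  Vtg 0 = 0.\<close>
fun Vtg :: "real \<Rightarrow> 's::euclidean_space set \<Rightarrow> ('s \<Rightarrow> 'a \<Rightarrow> 's \<Rightarrow> real)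
            \<Rightarrow> ('s \<Rightarrow> 'a \<Rightarrow> real) \<Rightarrow> ('s \<Rightarrow> 'a) \<Rightarrow> nat \<Rightarrow> 's \<Rightarrow> real" where
  "Vtg \<beta> S p r \<mu> 0 s = 0"
| "Vtg \<beta> S p r \<mu> (Suc k) s =
     r s (\<mu> s) + (1 / \<beta>) * ln (LINT s':S|lborel. p s (\<mu> s) s' * exp (\<beta> * Vtg \<beta> S p r \<mu> k s'))"

definition Vsoft :: "real \<Rightarrow> 's::euclidean_space set \<Rightarrow> ('s \<Rightarrow> 'a \<Rightarrow> 's \<Rightarrow> real)
            \<Rightarrow> ('s \<Rightarrow> 'a \<Rightarrow> real) \<Rightarrow> ('s \<Rightarrow> 'a) \<Rightarrow> nat \<Rightarrow> nat \<Rightarrow> 's \<Rightarrow> real" where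
  "Vsoft \<beta> S p r \<mu> T t = Vtg \<beta> S p r \<mu> (T + 1 - t)"

definition Qsoft :: "real \<Rightarrow> 's::euclidean_space set \<Rightarrow> ('s \<Rightarrow> 'a \<Rightarrow> 's \<Rightarrow> real)
            \<Rightarrow> ('s \<Rightarrow> 'a \<Rightarrow> real) \<Rightarrow> ('s \<Rightarrow> 'a) \<Rightarrow> nat \<Rightarrow> nat \<Rightarrow> 's \<Rightarrow> 'a \<Rightarrow> real" where
  "Qsoft \<beta> S p r \<mu> T t s a =
     r s a + (1 / \<beta>) * ln (LINT s':S|lborel. p s a s' * exp (\<beta> * Vsoft \<beta> S p r \<mu> T (t + 1) s'))"

definition Jbeta :: "real \<Rightarrow> 's::euclidean_space set \<Rightarrow> ('s \<Rightarrow> real) \<Rightarrow> ('s \<Rightarrow> 'a \<Rightarrow> 's \<Rightarrow> real)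
            \<Rightarrow> ('s \<Rightarrow> 'a \<Rightarrow> real) \<Rightarrow> ('s \<Rightarrow> 'a) \<Rightarrow> nat \<Rightarrow> real" where
  "Jbeta \<beta> S p1 p r \<mu> T =
     (1 / \<beta>) * ln (LINT s:S|lborel. p1 s * exp (\<beta> * Vsoft \<beta> S p r \<mu> T 1 s))"

definition ptw :: "real \<Rightarrow> 's::euclidean_space set \<Rightarrow> ('s \<Rightarrow> 'a \<Rightarrow> 's \<Rightarrow> real)
            \<Rightarrow> ('s \<Rightarrow> 'a \<Rightarrow> real) \<Rightarrow> ('s \<Rightarrow> 'a) \<Rightarrow> nat \<Rightarrow> nat \<Rightarrow> 's \<Rightarrow> 'a \<Rightarrow> 's \<Rightarrow> real" where
  "ptw \<beta> S p r \<mu> T t s a s' =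
     p s a s' * exp (\<beta> * Vsoft \<beta> S p r \<mu> T (t + 1) s')
     / (LINT s'':S|lborel. p s a s'' * exp (\<beta> * Vsoft \<beta> S p r \<mu> T (t + 1) s''))"

text \<open>Marginal densities of the twisted process, indexed by k = t - 1:
  rho_aux 0 = p_1^*, and rho_aux (k+1)(s') = int rho_aux k (s) p*_{k+1}(s'|s,mu(s)) ds.\<close>
fun rho_aux :: "real \<Rightarrow> 's::euclidean_space set \<Rightarrow> ('s \<Rightarrow> real) \<Rightarrow> ('s \<Rightarrow> 'a \<Rightarrow> 's \<Rightarrow> real)
            \<Rightarrow> ('s \<Rightarrow> 'a \<Rightarrow> real) \<Rightarrow> ('s \<Rightarrow> 'a) \<Rightarrow> nat \<Rightarrow> nat \<Rightarrow> 's \<Rightarrow> real" where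
  "rho_aux \<beta> S p1 p r \<mu> T 0 s =
     p1 s * exp (\<beta> * Vsoft \<beta> S p r \<mu> T 1 s)
     / (LINT s'':S|lborel. p1 s'' * exp (\<beta> * Vsoft \<beta> S p r \<mu> T 1 s''))"
| "rho_aux \<beta> S p1 p r \<mu> T (Suc k) s' =
     (LINT s:S|lborel. rho_aux \<beta> S p1 p r \<mu> T k s * ptw \<beta> S p r \<mu> T (Suc k) s (\<mu> s) s')"

definition rho_star :: "real \<Rightarrow> 's::euclidean_space set \<Rightarrow> ('s \<Rightarrow> real) \<Rightarrow> ('s \<Rightarrow> 'a \<Rightarrow> 's \<Rightarrow> real)
            \<Rightarrow> ('s \<Rightarrow> 'a \<Rightarrow> real) \<Rightarrow> ('s \<Rightarrow> 'a) \<Rightarrow> nat \<Rightarrow> nat \<Rightarrow> 's \<Rightarrow> real" where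
  "rho_star \<beta> S p1 p r \<mu> T t = rho_aux \<beta> S p1 p r \<mu> T (t - 1)"

end

theory Submission
  imports Defs
begin


lemma sint_cont:
  fixes f :: "'s::euclidean_space \<Rightarrow> 'c::{banach,second_countable_topology}"
  assumes "compact S" "continuous_on S f"
  shows "set_integrable lborel S f"
  unfolding set_integrable_def using borel_integrable_compact[OF assms] .

lemma sint_norm_le:
  fixes f :: "'s::euclidean_space \<Rightarrow> 'c::{banach,second_countable_topology}"
  assumes S: "compact S" and f: "continuous_on S f" and b: "\<And>s. s \<in> S \<Longrightarrow> norm (f s) \<le> e"
  shows "norm (LINT s:S|lborel. f s) \<le> e * measure lborel S"
proof -
  have i1: "integrable lborel (\<lambda>s. indicator S s *\<^sub>R f s)"
    using borel_integrable_compact[OF S f] .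
  have i2: "integrable lborel (\<lambda>s. indicator S s *\<^sub>R e)"
    using borel_integrable_compact[OF S continuous_on_const] .
  have "norm (LINT s:S|lborel. f s) \<le> (LINT s|lborel. indicator S s *\<^sub>R e)"
    unfolding set_lebesgue_integral_def
    by (rule Bochner_Integration.integral_norm_bound_integral[OF i1 i2]) (auto simp: b split: split_indicator)
  also have "\<dots> = e * measure lborel S"
    by simp
  finally show ?thesis .
qed

lemma sint_inner:
  fixes f :: "'s::euclidean_space \<Rightarrow> 'c::euclidean_space"
  assumes "set_integrable lborel S f"
  shows "(LINT s:S|lborel. f s \<bullet> h) = (LINT s:S|lborel. f s) \<bullet> h"
  using assms unfolding set_lebesgue_integral_def set_integrable_def
  by (subst integral_inner_left[symmetric]) auto

lemma sint_param_cont: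
  fixes F :: "'a::metric_space \<Rightarrow> 's::euclidean_space \<Rightarrow> 'c::{banach,second_countable_topology}"
  assumes S: "compact S" and F: "continuous_on (X \<times> S) (\<lambda>(x, s). F x s)"
  shows "continuous_on X (\<lambda>x. LINT s:S|lborel. F x s)"
  unfolding continuous_on_iff
proof (intro ballI allI impI)
  fix x0 and e :: real
  assume x0: "x0 \<in> X" and e: "0 < e"
  define e' where "e' = e / (measure lborel S + 1)"
  have mS: "measure lborel S \<ge> 0" by simp
  have mS1: "measure lborel S + 1 > 0" using mS by linarith
  have e': "e' > 0" using e mS1 unfolding e'_def by (rule divide_pos_pos)
  obtain X0 where X0: "x0 \<in> X0" "open X0" and
    bd: "\<forall>x\<in>X0 \<inter> X. \<forall>t\<in>S. dist ((\<lambda>(x, s). F x s) (x, t)) ((\<lambda>(x, s). F x s) (x0, t)) \<le> e'"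
    using continuous_on_prod_compactE[OF F S x0 e'] by blast
  obtain d where d: "d > 0" "ball x0 d \<subseteq> X0" using X0 open_contains_ball by blast
  have Fc: "continuous_on S (F x)" if "x \<in> X" for x
    using continuous_on_compose2[OF F, of S "\<lambda>s. (x, s)"] that
    by (auto simp: continuous_on_Pair continuous_on_const continuous_on_id)
  show "\<exists>d>0. \<forall>x'\<in>X. dist x' x0 < d \<longrightarrow> dist (LINT s:S|lborel. F x' s) (LINT s:S|lborel. F x0 s) < e"
  proof (intro exI[of _ d] conjI ballI impI d)
    fix x assume x: "x \<in> X" "dist x x0 < d"
    then have xX0: "x \<in> X0" using d by (auto simp: dist_commute)
    have "dist (LINT s:S|lborel. F x s) (LINT s:S|lborel. F x0 s) = norm (LINT s:S|lborel. F x s - F x0 s)"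
      by (simp add: dist_norm set_integral_diff(2)[OF sint_cont[OF S Fc[OF x(1)]] sint_cont[OF S Fc[OF x0]]])
    also have "\<dots> \<le> e' * measure lborel S"
      using bd xX0 x by (intro sint_norm_le[OF S]) (auto intro!: continuous_intros Fc x0 simp: dist_norm)
    also have "\<dots> < e"
      using e mS mS1 unfolding e'_def by (simp add: field_simps)
    finally show "dist (LINT s:S|lborel. F x s) (LINT s:S|lborel. F x0 s) < e" .
  qed
qed

lemma sint_param_deriv:
  fixes f :: "'a::euclidean_space \<Rightarrow> 's::euclidean_space \<Rightarrow> real" and g :: "'a \<Rightarrow> 's \<Rightarrow> 'a"
  assumes S: "compact S"
    and fd: "\<And>x s. s \<in> S \<Longrightarrow> ((\<lambda>x. f x s) has_derivative (\<lambda>h. g x s \<bullet> h)) (at x)"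
    and gc: "continuous_on (UNIV \<times> S) (\<lambda>(x, s). g x s)"
    and fc: "\<And>x. continuous_on S (f x)"
  shows "((\<lambda>x. LINT s:S|lborel. f x s) has_derivative (\<lambda>h. (LINT s:S|lborel. g x0 s) \<bullet> h)) (at x0)"
  unfolding has_derivative_at_alt
proof (intro conjI allI impI)
  show "bounded_linear (\<lambda>h. (LINT s:S|lborel. g x0 s) \<bullet> h)"
    by (rule bounded_linear_inner_right)
  fix e :: real assume e: "e > 0"
  define e' where "e' = e / (measure lborel S + 1)"
  have mS: "measure lborel S \<ge> 0" by simp
  have mS1: "measure lborel S + 1 > 0" using mS by linarith
  have e': "e' > 0" using e mS1 unfolding e'_def by (rule divide_pos_pos)
  obtain X0 where X0: "x0 \<in> X0" "open X0" and
    bd: "\<forall>x\<in>X0 \<inter> UNIV. \<forall>t\<in>S. dist ((\<lambda>(x, s). g x s) (x, t)) ((\<lambda>(x, s). g x s) (x0, t)) \<le> e'"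
    using continuous_on_prod_compactE[OF gc S _ e'] by blast
  obtain d where d: "d > 0" "ball x0 d \<subseteq> X0" using X0 open_contains_ball by blast
  have gcs: "continuous_on S (g x)" for x
    using continuous_on_compose2[OF gc, of S "\<lambda>s. (x, s)"]
    by (auto simp: continuous_on_Pair continuous_on_const continuous_on_id)
  show "\<exists>d>0. \<forall>y. norm (y - x0) < d \<longrightarrow>
      norm ((LINT s:S|lborel. f y s) - (LINT s:S|lborel. f x0 s) - (LINT s:S|lborel. g x0 s) \<bullet> (y - x0)) \<le> e * norm (y - x0)"
  proof (intro exI[of _ d] conjI allI impI d)
    fix y assume y: "norm (y - x0) < d"
    have pt: "norm (f y s - f x0 s - g x0 s \<bullet> (y - x0)) \<le> norm (y - x0) * e'" if s: "s \<in> S" for s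
    proof (rule differentiable_bound_linearization[where S="ball x0 d" and f="\<lambda>x. f x s" and f'="\<lambda>x h. g x s \<bullet> h"])
      fix t :: real assume t: "t \<in> {0..1}"
      have "norm (x0 + t *\<^sub>R (y - x0) - x0) = t * norm (y - x0)" using t by simp
      also have "\<dots> \<le> norm (y - x0)" using t by (simp add: mult_left_le_one_le)
      finally show "x0 + t *\<^sub>R (y - x0) \<in> ball x0 d" using y by (simp add: dist_norm norm_minus_commute)
    next
      fix x assume "x \<in> ball x0 d"
      show "((\<lambda>x. f x s) has_derivative (\<lambda>h. g x s \<bullet> h)) (at x within ball x0 d)"
        using fd[OF s] by (rule has_derivative_at_withinI)
    next
      fix x assume x: "x \<in> ball x0 d"
      have "onorm ((\<lambda>h. g x s \<bullet> h) - (\<lambda>h. g x0 s \<bullet> h)) = onorm (\<lambda>h. (g x s - g x0 s) \<bullet> h)"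
        by (simp add: fun_diff_def inner_diff_left)
      also have "\<dots> \<le> norm (g x s - g x0 s)"
        using onorm_inner_right[OF bounded_linear_ident, of "g x s - g x0 s"] by (simp add: onorm_id)
      also have "\<dots> \<le> e'" using bd x d s by (auto simp: dist_norm)
      finally show "onorm ((\<lambda>h. g x s \<bullet> h) - (\<lambda>h. g x0 s \<bullet> h)) \<le> e'" .
    qed (use d in auto)
    have i1: "set_integrable lborel S (f y)" "set_integrable lborel S (f x0)"
      by (auto intro!: sint_cont S fc)
    have i2: "set_integrable lborel S (g x0)" by (auto intro!: sint_cont S gcs)
    have i3: "set_integrable lborel S (\<lambda>s. g x0 s \<bullet> (y - x0))"
      by (auto intro!: sint_cont S gcs continuous_intros)
    have "(LINT s:S|lborel. f y s) - (LINT s:S|lborel. f x0 s) - (LINT s:S|lborel. g x0 s) \<bullet> (y - x0)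
        = (LINT s:S|lborel. f y s - f x0 s - g x0 s \<bullet> (y - x0))"
      using i1 i2 i3 by (simp add: sint_inner set_integral_diff)
    also have "norm \<dots> \<le> (norm (y - x0) * e') * measure lborel S"
      by (rule sint_norm_le[OF S]) (use pt in \<open>auto intro!: continuous_intros fc gcs\<close>)
    also have "\<dots> \<le> e * norm (y - x0)"
    proof -
      have "e' * measure lborel S \<le> e" using e mS mS1 unfolding e'_def by (simp add: field_simps)
      then show ?thesis using mult_left_mono[of "e' * measure lborel S" e "norm (y - x0)"] by (simp add: ac_simps)
    qed
    finally show "norm ((LINT s:S|lborel. f y s) - (LINT s:S|lborel. f x0 s) - (LINT s:S|lborel. g x0 s) \<bullet> (y - x0)) \<le> e * norm (y - x0)" .
  qed
qed


lemma sint_fubini: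
  fixes \<rho> d :: "'s::euclidean_space \<Rightarrow> real" and K :: "'s \<Rightarrow> 's \<Rightarrow> real"
  assumes S: "compact S" and \<rho>: "continuous_on S \<rho>" and K: "continuous_on (S \<times> S) (\<lambda>(s, s'). K s s')"
    and d: "continuous_on S d"
  shows "(LINT s:S|lborel. \<rho> s * (LINT s':S|lborel. K s s' * d s'))
       = (LINT s':S|lborel. (LINT s:S|lborel. \<rho> s * K s s') * d s')"
proof -
  define F where "F x y = indicator S x * indicator S y * (\<rho> x * K x y * d y)" for x y
  have "continuous_on (S \<times> S) (\<lambda>z. \<rho> (fst z) * (\<lambda>(s, s'). K s s') z * d (snd z))"
    by (intro continuous_intros continuous_on_compose2[OF \<rho>] continuous_on_compose2[OF d] K) auto
  then have "integrable lborel (\<lambda>z. indicator (S \<times> S) z *\<^sub>R (\<rho> (fst z) * (\<lambda>(s, s'). K s s') z * d (snd z)))"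
    by (intro borel_integrable_compact compact_Times S)
  moreover have "(\<lambda>z. indicator (S \<times> S) z *\<^sub>R (\<rho> (fst z) * (\<lambda>(s, s'). K s s') z * d (snd z))) = case_prod F"
    by (auto simp: F_def fun_eq_iff indicator_times)
  ultimately have int: "integrable (lborel \<Otimes>\<^sub>M lborel) (case_prod F)"
    unfolding lborel_prod by simp
  have "(LINT s:S|lborel. \<rho> s * (LINT s':S|lborel. K s s' * d s')) = (\<integral>x. (\<integral>y. F x y \<partial>lborel) \<partial>lborel)"
    unfolding set_lebesgue_integral_def F_def
  proof (intro Bochner_Integration.integral_cong refl)
    fix x
    show "indicator S x *\<^sub>R (\<rho> x * (LBINT y. indicator S y *\<^sub>R (K x y * d y))) =
      (LBINT y. indicator S x * indicator S y * (\<rho> x * K x y * d y))"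
      by (simp add: integral_mult_right_zero[symmetric] del: integral_mult_right_zero) (simp add: ac_simps)
  qed
  also have "\<dots> = (\<integral>y. (\<integral>x. F x y \<partial>lborel) \<partial>lborel)"
    by (rule lborel_pair.Fubini_integral[OF int, symmetric])
  also have "\<dots> = (LINT s':S|lborel. (LINT s:S|lborel. \<rho> s * K s s') * d s')"
    unfolding set_lebesgue_integral_def F_def
  proof (intro Bochner_Integration.integral_cong refl)
    fix y
    show "(LBINT x. indicator S x * indicator S y * (\<rho> x * K x y * d y)) =
      indicator S y *\<^sub>R ((LBINT x. indicator S x *\<^sub>R (\<rho> x * K x y)) * d y)"
      by (simp add: integral_mult_right_zero[symmetric] integral_mult_left_zero[symmetric] del: integral_mult_right_zero integral_mult_left_zero) (simp add: ac_simps)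
  qed
  finally show ?thesis .
qed



locale mdp =
  fixes \<beta> b L :: real
    and S :: "'s::euclidean_space set"
    and p1 :: "'s \<Rightarrow> real"
    and p :: "'s \<Rightarrow> real^'m \<Rightarrow> 's \<Rightarrow> real"
    and gp :: "'s \<Rightarrow> real^'m \<Rightarrow> 's \<Rightarrow> real^'m"
    and r :: "'s \<Rightarrow> real^'m \<Rightarrow> real"
    and gr :: "'s \<Rightarrow> real^'m \<Rightarrow> real^'m"
    and \<mu> :: "real^'n \<Rightarrow> 's \<Rightarrow> real^'m"
    and D\<mu> :: "real^'n \<Rightarrow> 's \<Rightarrow> real^'n^'m"
  assumes beta: "\<beta> \<noteq> 0"
    and S_compact: "compact S"
    and p1_nonneg: "\<forall>s\<in>S. 0 \<le> p1 s"
    and p1_int: "(LINT s:S|lborel. p1 s) = 1"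
    and p_nonneg: "\<forall>s\<in>S. \<forall>a. \<forall>s'\<in>S. 0 \<le> p s a s'"
    and p_int: "\<forall>s\<in>S. \<forall>a. (LINT s':S|lborel. p s a s') = 1"
    and gp_deriv: "\<forall>s\<in>S. \<forall>a. \<forall>s'\<in>S. ((\<lambda>a. p s a s') has_derivative (\<lambda>h. gp s a s' \<bullet> h)) (at a)"
    and gr_deriv: "\<forall>s\<in>S. \<forall>a. ((\<lambda>a. r s a) has_derivative (\<lambda>h. gr s a \<bullet> h)) (at a)"
    and D\<mu>_deriv: "\<forall>\<theta>'. \<forall>s\<in>S. ((\<lambda>\<theta>. \<mu> \<theta> s) has_derivative (\<lambda>h. D\<mu> \<theta>' s *v h)) (at \<theta>')"
    and p_cont: "continuous_on (S \<times> UNIV \<times> S) (\<lambda>(s, a, s'). p s a s')"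
    and gp_cont: "continuous_on (S \<times> UNIV \<times> S) (\<lambda>(s, a, s'). gp s a s')"
    and mu_cont: "continuous_on (UNIV \<times> S) (\<lambda>(\<theta>, s). \<mu> \<theta> s)"
    and D\<mu>_cont: "continuous_on (UNIV \<times> S) (\<lambda>(\<theta>, s). D\<mu> \<theta> s)"
    and r_cont: "continuous_on (S \<times> UNIV) (\<lambda>(s, a). r s a)"
    and gr_cont: "continuous_on (S \<times> UNIV) (\<lambda>(s, a). gr s a)"
    and p1_cont: "continuous_on S p1"
begin

definition W :: "nat \<Rightarrow> real^'n \<Rightarrow> 's \<Rightarrow> real" where
  "W k \<theta> s = Vtg \<beta> S p r (\<mu> \<theta>) k s"

definition H :: "nat \<Rightarrow> real^'n \<Rightarrow> 's \<Rightarrow> real^'m \<Rightarrow> real" where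
  "H k \<theta> s a = (LINT s':S|lborel. p s a s' * exp (\<beta> * W k \<theta> s'))"

definition VG :: "nat \<Rightarrow> real^'n \<Rightarrow> 's \<Rightarrow> real^'m \<Rightarrow> real^'m" where
  "VG k \<theta> s a = (LINT s':S|lborel. exp (\<beta> * W k \<theta> s') *\<^sub>R gp s a s')"

definition Ga :: "nat \<Rightarrow> real^'n \<Rightarrow> 's \<Rightarrow> real^'m \<Rightarrow> real^'m" where
  "Ga k \<theta> s a = gr s a + (1 / (\<beta> * H k \<theta> s a)) *\<^sub>R VG k \<theta> s a"

primrec DW :: "nat \<Rightarrow> real^'n \<Rightarrow> 's \<Rightarrow> real^'n" where
  "DW 0 = (\<lambda>\<theta> s. 0)"
| "DW (Suc k) = (\<lambda>\<theta> s. Ga k \<theta> s (\<mu> \<theta> s) v* D\<mu> \<theta> s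
      + (1 / H k \<theta> s (\<mu> \<theta> s)) *\<^sub>R (LINT s':S|lborel. (p s (\<mu> \<theta> s) s' * exp (\<beta> * W k \<theta> s')) *\<^sub>R DW k \<theta> s'))"

lemma W_0: "W 0 \<theta> s = 0" by (simp add: W_def)

lemma W_Suc: "W (Suc k) \<theta> s = r s (\<mu> \<theta> s) + (1 / \<beta>) * ln (H k \<theta> s (\<mu> \<theta> s))"
  by (simp add: W_def H_def)

lemma S_ne: "S \<noteq> {}"
  using p1_int by (auto simp: set_lebesgue_integral_def)

lemma pos_int:
  fixes q w :: "'s \<Rightarrow> real"
  assumes qc: "continuous_on S q" and qn: "\<forall>s\<in>S. 0 \<le> q s" and qi: "(LINT s:S|lborel. q s) = 1"
    and wc: "continuous_on S w"
  shows "(LINT s:S|lborel. q s * exp (\<beta> * w s)) > 0"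
proof -
  have ec: "continuous_on S (\<lambda>s. exp (\<beta> * w s))" by (intro continuous_intros wc)
  obtain s0 where s0: "s0 \<in> S" "\<And>s. s \<in> S \<Longrightarrow> exp (\<beta> * w s0) \<le> exp (\<beta> * w s)"
    using continuous_attains_inf[OF S_compact S_ne ec] by blast
  have "exp (\<beta> * w s0) = (LINT s:S|lborel. q s * exp (\<beta> * w s0))"
    using qi by simp
  also have "\<dots> \<le> (LINT s:S|lborel. q s * exp (\<beta> * w s))"
    by (intro set_integral_mono sint_cont S_compact continuous_intros qc wc)
       (use qn s0 in \<open>auto intro: mult_left_mono simp del: exp_le_cancel_iff\<close>)
  finally show ?thesis by (smt (verit) exp_gt_zero)
qed


lemma cont3:
  fixes F :: "'s \<Rightarrow> real^'m \<Rightarrow> 's \<Rightarrow> 'c::topological_space"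
  assumes F: "continuous_on (S \<times> UNIV \<times> S) (\<lambda>(s, a, s'). F s a s')"
    and c: "continuous_on X fs" "continuous_on X fa" "continuous_on X ft"
    and i: "fs ` X \<subseteq> S" "ft ` X \<subseteq> S"
  shows "continuous_on X (\<lambda>x. F (fs x) (fa x) (ft x))"
proof -
  have "(\<lambda>x. (fs x, fa x, ft x)) ` X \<subseteq> S \<times> UNIV \<times> S" using i by auto
  moreover have "continuous_on X (\<lambda>x. (fs x, fa x, ft x))" by (intro continuous_on_Pair c)
  ultimately show ?thesis using continuous_on_compose2[OF F, of X "\<lambda>x. (fs x, fa x, ft x)"] by simp
qed

lemma cont2:
  fixes F :: "'a::topological_space \<Rightarrow> 'b::topological_space \<Rightarrow> 'c::topological_space"
  assumes F: "continuous_on (A \<times> B) (\<lambda>(s, a). F s a)"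
    and c: "continuous_on X fs" "continuous_on X fa"
    and i: "fs ` X \<subseteq> A" "fa ` X \<subseteq> B"
  shows "continuous_on X (\<lambda>x. F (fs x) (fa x))"
  using continuous_on_compose2[OF F, of X "\<lambda>x. (fs x, fa x)"] c i
  by (auto intro!: continuous_on_Pair)

lemma cont_p: "continuous_on X fs \<Longrightarrow> continuous_on X fa \<Longrightarrow> continuous_on X ft \<Longrightarrow> fs ` X \<subseteq> S \<Longrightarrow> ft ` X \<subseteq> S
  \<Longrightarrow> continuous_on X (\<lambda>x. p (fs x) (fa x) (ft x))"
  by (rule cont3[OF p_cont])

lemma cont_gp: "continuous_on X fs \<Longrightarrow> continuous_on X fa \<Longrightarrow> continuous_on X ft \<Longrightarrow> fs ` X \<subseteq> S \<Longrightarrow> ft ` X \<subseteq> S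
  \<Longrightarrow> continuous_on X (\<lambda>x. gp (fs x) (fa x) (ft x))"
  by (rule cont3[OF gp_cont])

lemma cont_r: "continuous_on X fs \<Longrightarrow> continuous_on X fa \<Longrightarrow> fs ` X \<subseteq> S
  \<Longrightarrow> continuous_on X (\<lambda>x. r (fs x) (fa x))"
  by (rule cont2[OF r_cont]) auto

lemma cont_gr: "continuous_on X fs \<Longrightarrow> continuous_on X fa \<Longrightarrow> fs ` X \<subseteq> S
  \<Longrightarrow> continuous_on X (\<lambda>x. gr (fs x) (fa x))"
  by (rule cont2[OF gr_cont]) auto

lemma cont_mu: "continuous_on X ft \<Longrightarrow> continuous_on X fs \<Longrightarrow> fs ` X \<subseteq> S
  \<Longrightarrow> continuous_on X (\<lambda>x. \<mu> (ft x) (fs x))"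
  by (rule cont2[OF mu_cont]) auto

lemma cont_Dmu: "continuous_on X ft \<Longrightarrow> continuous_on X fs \<Longrightarrow> fs ` X \<subseteq> S
  \<Longrightarrow> continuous_on X (\<lambda>x. D\<mu> (ft x) (fs x))"
  by (rule cont2[OF D\<mu>_cont]) auto

lemma cont_p1: "continuous_on X fs \<Longrightarrow> fs ` X \<subseteq> S \<Longrightarrow> continuous_on X (\<lambda>x. p1 (fs x))"
  by (rule continuous_on_compose2[OF p1_cont])

lemma H_pos:
  assumes "continuous_on S (W k \<theta>)" "s \<in> S"
  shows "H k \<theta> s a > 0"
  unfolding H_def
  by (rule pos_int) (use assms p_nonneg p_int in \<open>auto intro!: cont_p continuous_intros\<close>)

lemma cont_H:
  assumes W: "continuous_on (UNIV \<times> S) (\<lambda>(\<theta>, s). W k \<theta> s)"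
  shows "continuous_on (UNIV \<times> S \<times> UNIV) (\<lambda>(\<theta>, s, a). H k \<theta> s a)"
    and "continuous_on (UNIV \<times> S \<times> UNIV) (\<lambda>(\<theta>, s, a). VG k \<theta> s a)"
proof -
  have Wc: "continuous_on X (\<lambda>x. W k (ft x) (fs x))" if "continuous_on X ft" "continuous_on X fs" "fs ` X \<subseteq> S" for X ft fs
    using cont2[OF W that(1,2) _ that(3)] by simp
  show "continuous_on (UNIV \<times> S \<times> UNIV) (\<lambda>(\<theta>, s, a). H k \<theta> s a)"
    unfolding H_def split_beta
    by (rule sint_param_cont[OF S_compact])
       (auto simp: split_beta intro!: cont_p Wc continuous_intros)
  show "continuous_on (UNIV \<times> S \<times> UNIV) (\<lambda>(\<theta>, s, a). VG k \<theta> s a)"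
    unfolding VG_def split_beta
    by (rule sint_param_cont[OF S_compact])
       (auto simp: split_beta intro!: cont_gp Wc continuous_intros)
qed

lemma cont_W: "continuous_on (UNIV \<times> S) (\<lambda>(\<theta>, s). W k \<theta> s)"
proof (induction k)
  case 0
  then show ?case by (simp add: W_0 continuous_on_const)
next
  case (Suc k)
  have Hc: "continuous_on X (\<lambda>x. H k (ft x) (fs x) (fa x))"
    if "continuous_on X ft" "continuous_on X fs" "continuous_on X fa" "fs ` X \<subseteq> S" for X ft fs fa
  proof -
    have "(\<lambda>x. (ft x, fs x, fa x)) ` X \<subseteq> UNIV \<times> S \<times> UNIV" using that by auto
    moreover have "continuous_on X (\<lambda>x. (ft x, fs x, fa x))" by (intro continuous_on_Pair that)
    ultimately show ?thesis using continuous_on_compose2[OF cont_H(1)[OF Suc], of X "\<lambda>x. (ft x, fs x, fa x)"] by simp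
  qed
  have Wc: "continuous_on S (W k \<theta>)" for \<theta>
    using cont2[OF Suc, of S "\<lambda>_. \<theta>" "\<lambda>s. s"] by (auto intro!: continuous_intros)
  have Hp: "H k \<theta> s a \<noteq> 0" if "s \<in> S" for \<theta> s a using H_pos[OF Wc[of \<theta>] that, of a] by simp
  show ?case
    unfolding W_Suc split_beta
    by (auto intro!: continuous_intros cont_r Hc cont_mu Hp simp: beta)
qed


definition IW :: "nat \<Rightarrow> real^'n \<Rightarrow> 's \<Rightarrow> real^'m \<Rightarrow> real^'n" where
  "IW k \<theta> s a = (LINT s':S|lborel. (p s a s' * exp (\<beta> * W k \<theta> s')) *\<^sub>R DW k \<theta> s')"

lemma DW_Suc': "DW (Suc k) \<theta> s = Ga k \<theta> s (\<mu> \<theta> s) v* D\<mu> \<theta> s + (1 / H k \<theta> s (\<mu> \<theta> s)) *\<^sub>R IW k \<theta> s (\<mu> \<theta> s)"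
  by (simp add: IW_def)

lemma Wc_S: "continuous_on S (W k \<theta>)"
  using cont2[OF cont_W, of S "\<lambda>_. \<theta>" "\<lambda>s. s"] by (auto intro!: continuous_intros)

lemma Wc_gen: "continuous_on X ft \<Longrightarrow> continuous_on X fs \<Longrightarrow> fs ` X \<subseteq> S \<Longrightarrow> continuous_on X (\<lambda>x. W k (ft x) (fs x))"
  using cont2[OF cont_W] by auto

lemma pcS: "s \<in> S \<Longrightarrow> continuous_on S (p s a)"
  by (rule cont_p[of S "\<lambda>_. s" "\<lambda>_. a" "\<lambda>s. s", simplified]) (auto intro!: continuous_intros)

lemma gpcS: "s \<in> S \<Longrightarrow> continuous_on S (gp s a)"
  by (rule cont_gp[of S "\<lambda>_. s" "\<lambda>_. a" "\<lambda>s. s", simplified]) (auto intro!: continuous_intros)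

lemma deriv_H:
  assumes Wd: "\<And>\<theta> s. s \<in> S \<Longrightarrow> ((\<lambda>\<theta>. W k \<theta> s) has_derivative (\<lambda>h. DW k \<theta> s \<bullet> h)) (at \<theta>)"
    and DWc: "continuous_on (UNIV \<times> S) (\<lambda>(\<theta>, s). DW k \<theta> s)"
    and s: "s \<in> S"
  shows "((\<lambda>x. H k (fst x) s (snd x)) has_derivative
           (\<lambda>h. (\<beta> *\<^sub>R IW k \<theta> s a) \<bullet> fst h + VG k \<theta> s a \<bullet> snd h)) (at (\<theta>, a))"
proof -
  define g where "g x s' = ((p s (snd x) s' * exp (\<beta> * W k (fst x) s') * \<beta>) *\<^sub>R DW k (fst x) s',
                             exp (\<beta> * W k (fst x) s') *\<^sub>R gp s (snd x) s')" for x s'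
  have DWc': "continuous_on X (\<lambda>x. DW k (ft x) (fs x))" if "continuous_on X ft" "continuous_on X fs" "fs ` X \<subseteq> S" for X ft fs
    using cont2[OF DWc that(1,2) _ that(3)] by simp
  have fd: "((\<lambda>x. p s (snd x) s' * exp (\<beta> * W k (fst x) s')) has_derivative (\<lambda>h. g x s' \<bullet> h)) (at x)"
    if s': "s' \<in> S" for x s'
  proof -
    have gd: "((\<lambda>a. p s a s') has_derivative (\<lambda>h. gp s (snd x) s' \<bullet> h)) (at (snd x))"
      using gp_deriv s s' by blast
    have d1: "((\<lambda>x. p s (snd x) s') has_derivative (\<lambda>h. gp s (snd x) s' \<bullet> snd h)) (at x)"
      using has_derivative_compose[OF has_derivative_snd[OF has_derivative_ident] gd]
      by simp
    have d2: "((\<lambda>x. W k (fst x) s') has_derivative (\<lambda>h. DW k (fst x) s' \<bullet> fst h)) (at x)"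
      using has_derivative_compose[OF has_derivative_fst[OF has_derivative_ident] Wd[OF s', of "fst x"]]
      by simp
    have d3: "((\<lambda>x. exp (\<beta> * W k (fst x) s')) has_derivative (\<lambda>h. (\<beta> * (DW k (fst x) s' \<bullet> fst h)) * exp (\<beta> * W k (fst x) s'))) (at x)"
      by (rule has_derivative_exp[OF has_derivative_mult_right[OF d2]])
    show ?thesis
      by (rule has_derivative_eq_rhs[OF has_derivative_mult[OF d1 d3]])
         (auto simp: g_def fun_eq_iff inner_prod_def algebra_simps)
  qed
  have gc: "continuous_on (UNIV \<times> S) (\<lambda>(x, s'). g x s')"
    unfolding g_def split_beta using s
    by (auto intro!: continuous_intros cont_p cont_gp Wc_gen DWc')
  have fc: "continuous_on S (\<lambda>s'. p s (snd x) s' * exp (\<beta> * W k (fst x) s'))" for x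
    using s by (auto intro!: continuous_intros pcS Wc_S)
  have main: "((\<lambda>x. H k (fst x) s (snd x)) has_derivative (\<lambda>h. (LINT s':S|lborel. g (\<theta>, a) s') \<bullet> h)) (at (\<theta>, a))"
    unfolding H_def by (rule sint_param_deriv[OF S_compact fd gc fc])
  have i1: "set_integrable lborel S (\<lambda>s'. (p s a s' * exp (\<beta> * W k \<theta> s') * \<beta>) *\<^sub>R DW k \<theta> s')"
    using s by (auto intro!: sint_cont S_compact continuous_intros pcS Wc_S DWc' simp: image_subset_iff)
  have i2: "set_integrable lborel S (\<lambda>s'. exp (\<beta> * W k \<theta> s') *\<^sub>R gp s a s')"
    using s by (auto intro!: sint_cont S_compact continuous_intros gpcS Wc_S)
  have "(LINT s':S|lborel. g (\<theta>, a) s') \<bullet> h = (\<beta> *\<^sub>R IW k \<theta> s a) \<bullet> fst h + VG k \<theta> s a \<bullet> snd h" for h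
  proof -
    have gcs: "continuous_on S (g (\<theta>, a))"
      using cont2[OF gc, of S "\<lambda>_. (\<theta>, a)" "\<lambda>s. s"] by (auto intro!: continuous_intros)
    have "(LINT s':S|lborel. g (\<theta>, a) s') \<bullet> h = (LINT s':S|lborel. g (\<theta>, a) s' \<bullet> h)"
      by (rule sint_inner[symmetric]) (auto intro!: sint_cont S_compact gcs)
    also have "\<dots> = (LINT s':S|lborel. ((p s a s' * exp (\<beta> * W k \<theta> s') * \<beta>) *\<^sub>R DW k \<theta> s') \<bullet> fst h
                    + (exp (\<beta> * W k \<theta> s') *\<^sub>R gp s a s') \<bullet> snd h)"
      by (simp add: g_def inner_prod_def)
    also have "\<dots> = (LINT s':S|lborel. ((p s a s' * exp (\<beta> * W k \<theta> s') * \<beta>) *\<^sub>R DW k \<theta> s') \<bullet> fst h)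
                    + (LINT s':S|lborel. (exp (\<beta> * W k \<theta> s') *\<^sub>R gp s a s') \<bullet> snd h)"
      by (rule set_integral_add(2)) (use s in \<open>auto intro!: sint_cont S_compact continuous_intros pcS Wc_S gpcS DWc' simp: image_subset_iff\<close>)
    also have "\<dots> = (LINT s':S|lborel. (p s a s' * exp (\<beta> * W k \<theta> s') * \<beta>) *\<^sub>R DW k \<theta> s') \<bullet> fst h
                    + (LINT s':S|lborel. exp (\<beta> * W k \<theta> s') *\<^sub>R gp s a s') \<bullet> snd h"
      by (simp only: sint_inner[OF i1] sint_inner[OF i2])
    also have "\<dots> = (\<beta> *\<^sub>R IW k \<theta> s a) \<bullet> fst h + VG k \<theta> s a \<bullet> snd h"
      by (simp add: IW_def VG_def mult.commute[of _ \<beta>] mult.assoc flip: scaleR_scaleR)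
    finally show ?thesis .
  qed
  then show ?thesis using main by simp
qed


lemma cont_vm:
  fixes f :: "'a::topological_space \<Rightarrow> real^'q" and g :: "'a \<Rightarrow> real^'o^'q"
  assumes "continuous_on X f" "continuous_on X g"
  shows "continuous_on X (\<lambda>x. f x v* g x)"
  unfolding vector_matrix_mult_def
  by (intro continuous_intros assms)

lemma Hc_gen: "continuous_on X ft \<Longrightarrow> continuous_on X fs \<Longrightarrow> continuous_on X fa \<Longrightarrow> fs ` X \<subseteq> S
  \<Longrightarrow> continuous_on X (\<lambda>x. H k (ft x) (fs x) (fa x))"
proof -
  assume that: "continuous_on X ft" "continuous_on X fs" "continuous_on X fa" "fs ` X \<subseteq> S"
  have "(\<lambda>x. (ft x, fs x, fa x)) ` X \<subseteq> UNIV \<times> S \<times> UNIV" using that by auto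
  moreover have "continuous_on X (\<lambda>x. (ft x, fs x, fa x))" by (intro continuous_on_Pair that)
  ultimately show ?thesis using continuous_on_compose2[OF cont_H(1)[OF cont_W], of X "\<lambda>x. (ft x, fs x, fa x)"] by simp
qed

lemma VGc_gen: "continuous_on X ft \<Longrightarrow> continuous_on X fs \<Longrightarrow> continuous_on X fa \<Longrightarrow> fs ` X \<subseteq> S
  \<Longrightarrow> continuous_on X (\<lambda>x. VG k (ft x) (fs x) (fa x))"
proof -
  assume that: "continuous_on X ft" "continuous_on X fs" "continuous_on X fa" "fs ` X \<subseteq> S"
  have "(\<lambda>x. (ft x, fs x, fa x)) ` X \<subseteq> UNIV \<times> S \<times> UNIV" using that by auto
  moreover have "continuous_on X (\<lambda>x. (ft x, fs x, fa x))" by (intro continuous_on_Pair that)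
  ultimately show ?thesis using continuous_on_compose2[OF cont_H(2)[OF cont_W], of X "\<lambda>x. (ft x, fs x, fa x)"] by simp
qed

lemma H_pos': "s \<in> S \<Longrightarrow> H k \<theta> s a > 0"
  by (rule H_pos[OF Wc_S])

lemma H_nz: "s \<in> S \<Longrightarrow> H k \<theta> s a \<noteq> 0"
  using H_pos'[of s k \<theta> a] by simp

lemma Gac_gen: "continuous_on X ft \<Longrightarrow> continuous_on X fs \<Longrightarrow> continuous_on X fa \<Longrightarrow> fs ` X \<subseteq> S
  \<Longrightarrow> continuous_on X (\<lambda>x. Ga k (ft x) (fs x) (fa x))"
proof -
  assume that: "continuous_on X ft" "continuous_on X fs" "continuous_on X fa" "fs ` X \<subseteq> S"
  have nz: "\<forall>x\<in>X. \<beta> * H k (ft x) (fs x) (fa x) \<noteq> 0" using H_nz beta that(4) by auto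
  show ?thesis
    unfolding Ga_def
    by (intro continuous_intros cont_gr Hc_gen VGc_gen that nz)
qed

lemma deriv_W:
  "(\<forall>\<theta>. \<forall>s\<in>S. ((\<lambda>\<theta>. W k \<theta> s) has_derivative (\<lambda>h. DW k \<theta> s \<bullet> h)) (at \<theta>))
   \<and> continuous_on (UNIV \<times> S) (\<lambda>(\<theta>, s). DW k \<theta> s)"
proof (induction k)
  case 0
  then show ?case by (simp add: W_0 continuous_on_const)
next
  case (Suc k)
  have Wd: "\<And>\<theta> s. s \<in> S \<Longrightarrow> ((\<lambda>\<theta>. W k \<theta> s) has_derivative (\<lambda>h. DW k \<theta> s \<bullet> h)) (at \<theta>)"
    using Suc by blast
  have DWc: "continuous_on (UNIV \<times> S) (\<lambda>(\<theta>, s). DW k \<theta> s)" using Suc by blast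
  have DWc': "continuous_on X (\<lambda>x. DW k (ft x) (fs x))" if "continuous_on X ft" "continuous_on X fs" "fs ` X \<subseteq> S" for X ft fs
    using cont2[OF DWc that(1,2) _ that(3)] by simp
  have der: "((\<lambda>\<theta>. W (Suc k) \<theta> s) has_derivative (\<lambda>h. DW (Suc k) \<theta>0 s \<bullet> h)) (at \<theta>0)"
    if s: "s \<in> S" for \<theta>0 s
  proof -
    have dmu: "((\<lambda>\<theta>. \<mu> \<theta> s) has_derivative (\<lambda>h. D\<mu> \<theta>0 s *v h)) (at \<theta>0)"
      using D\<mu>_deriv s by blast
    have dpair: "((\<lambda>\<theta>. (\<theta>, \<mu> \<theta> s)) has_derivative (\<lambda>h. (h, D\<mu> \<theta>0 s *v h))) (at \<theta>0)"
      by (rule has_derivative_Pair[OF has_derivative_ident dmu])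
    have dH: "((\<lambda>\<theta>. H k \<theta> s (\<mu> \<theta> s)) has_derivative
        (\<lambda>h. (\<beta> *\<^sub>R IW k \<theta>0 s (\<mu> \<theta>0 s)) \<bullet> h + VG k \<theta>0 s (\<mu> \<theta>0 s) \<bullet> (D\<mu> \<theta>0 s *v h))) (at \<theta>0)"
      using has_derivative_compose[OF dpair deriv_H[OF Wd DWc s, of \<theta>0 "\<mu> \<theta>0 s"]] by simp
    have dln: "((\<lambda>\<theta>. ln (H k \<theta> s (\<mu> \<theta> s))) has_derivative
        (\<lambda>h. ((\<beta> *\<^sub>R IW k \<theta>0 s (\<mu> \<theta>0 s)) \<bullet> h + VG k \<theta>0 s (\<mu> \<theta>0 s) \<bullet> (D\<mu> \<theta>0 s *v h)) * inverse (H k \<theta>0 s (\<mu> \<theta>0 s)))) (at \<theta>0)"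
      by (rule has_derivative_ln[OF H_pos'[OF s] dH])
    have grd: "((\<lambda>a. r s a) has_derivative (\<lambda>h. gr s (\<mu> \<theta>0 s) \<bullet> h)) (at (\<mu> \<theta>0 s))"
      using gr_deriv s by blast
    have dr: "((\<lambda>\<theta>. r s (\<mu> \<theta> s)) has_derivative (\<lambda>h. gr s (\<mu> \<theta>0 s) \<bullet> (D\<mu> \<theta>0 s *v h))) (at \<theta>0)"
      using has_derivative_compose[OF dmu grd] by simp
    have Hnz: "H k \<theta>0 s (\<mu> \<theta>0 s) \<noteq> 0" by (rule H_nz[OF s])
    show ?thesis
      unfolding W_Suc
      by (rule has_derivative_eq_rhs[OF has_derivative_add[OF dr has_derivative_mult_right[OF dln]]])
         (use beta Hnz in \<open>auto simp: fun_eq_iff IW_def Ga_def inner_add_left dot_lmul_matrix field_simps\<close>)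
  qed
  have IWc: "continuous_on (UNIV \<times> S) (\<lambda>x. IW k (fst x) (snd x) (\<mu> (fst x) (snd x)))"
    unfolding IW_def
    by (rule sint_param_cont[OF S_compact])
       (auto simp: split_beta intro!: continuous_intros cont_p Wc_gen DWc' cont_mu)
  have "continuous_on (UNIV \<times> S) (\<lambda>(\<theta>, s). DW (Suc k) \<theta> s)"
    unfolding DW_Suc' split_beta
    by (auto intro!: continuous_intros cont_vm Gac_gen cont_mu cont_Dmu Hc_gen IWc[unfolded split_beta] H_nz)
  then show ?case using der by blast
qed


lemma Wd: "s \<in> S \<Longrightarrow> ((\<lambda>\<theta>. W k \<theta> s) has_derivative (\<lambda>h. DW k \<theta> s \<bullet> h)) (at \<theta>)"
  using deriv_W by blast

lemma DWc: "continuous_on (UNIV \<times> S) (\<lambda>(\<theta>, s). DW k \<theta> s)"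
  using deriv_W by blast

lemma DWc_gen: "continuous_on X ft \<Longrightarrow> continuous_on X fs \<Longrightarrow> fs ` X \<subseteq> S \<Longrightarrow> continuous_on X (\<lambda>x. DW k (ft x) (fs x))"
  using cont2[OF DWc] by auto

lemma Q_eq: "Qsoft \<beta> S p r (\<mu> \<theta>) T t s a = r s a + (1 / \<beta>) * ln (H (T - t) \<theta> s a)"
  by (simp add: Qsoft_def Vsoft_def H_def W_def)

lemma Q_deriv:
  assumes s: "s \<in> S"
  shows "((\<lambda>a. Qsoft \<beta> S p r (\<mu> \<theta>) T t s a) has_derivative (\<lambda>h. Ga (T - t) \<theta> s a0 \<bullet> h)) (at a0)"
proof -
  have dpair: "((\<lambda>a. (\<theta>, a)) has_derivative (\<lambda>h. (0, h))) (at a0)"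
    by (rule has_derivative_Pair[OF has_derivative_const has_derivative_ident])
  have dH: "((\<lambda>a. H (T - t) \<theta> s a) has_derivative (\<lambda>h. VG (T - t) \<theta> s a0 \<bullet> h)) (at a0)"
    using has_derivative_compose[OF dpair deriv_H[OF Wd DWc s, where \<theta>=\<theta> and a=a0]] by simp
  have dln: "((\<lambda>a. ln (H (T - t) \<theta> s a)) has_derivative (\<lambda>h. (VG (T - t) \<theta> s a0 \<bullet> h) * inverse (H (T - t) \<theta> s a0))) (at a0)"
    by (rule has_derivative_ln[OF H_pos'[OF s] dH])
  have grd: "((\<lambda>a. r s a) has_derivative (\<lambda>h. gr s a0 \<bullet> h)) (at a0)"
    using gr_deriv s by blast
  have Hnz: "H (T - t) \<theta> s a0 \<noteq> 0" by (rule H_nz[OF s])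
  show ?thesis
    unfolding Q_eq
    by (rule has_derivative_eq_rhs[OF has_derivative_add[OF grd has_derivative_mult_right[OF dln]]])
       (use beta Hnz in \<open>auto simp: fun_eq_iff Ga_def inner_add_left field_simps\<close>)
qed

definition Z :: "nat \<Rightarrow> real^'n \<Rightarrow> real" where
  "Z T \<theta> = (LINT s:S|lborel. p1 s * exp (\<beta> * W T \<theta> s))"

lemma Z_pos: "Z T \<theta> > 0"
  unfolding Z_def by (rule pos_int[OF p1_cont p1_nonneg p1_int Wc_S])

lemma J_eq: "Jbeta \<beta> S p1 p r (\<mu> \<theta>) T = (1 / \<beta>) * ln (Z T \<theta>)"
  by (simp add: Jbeta_def Vsoft_def Z_def W_def)

lemma rho0_eq: "rho_aux \<beta> S p1 p r (\<mu> \<theta>) T 0 s = p1 s * exp (\<beta> * W T \<theta> s) / Z T \<theta>"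
  by (simp add: Vsoft_def Z_def W_def)

lemma ptw_eq: "ptw \<beta> S p r (\<mu> \<theta>) T t s a s' = p s a s' * exp (\<beta> * W (T - t) \<theta> s') / H (T - t) \<theta> s a"
  by (simp add: ptw_def Vsoft_def H_def W_def)

lemma J_deriv:
  "((\<lambda>\<theta>'. Jbeta \<beta> S p1 p r (\<mu> \<theta>') T) has_derivative
     (\<lambda>h. LINT s:S|lborel. rho_aux \<beta> S p1 p r (\<mu> \<theta>) T 0 s * (DW T \<theta> s \<bullet> h))) (at \<theta>)"
proof -
  define g where "g \<theta> s = (p1 s * exp (\<beta> * W T \<theta> s) * \<beta>) *\<^sub>R DW T \<theta> s" for \<theta> s
  have fd: "((\<lambda>\<theta>. p1 s * exp (\<beta> * W T \<theta> s)) has_derivative (\<lambda>h. g \<theta> s \<bullet> h)) (at \<theta>)"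
    if s: "s \<in> S" for \<theta> s
    by (rule has_derivative_eq_rhs[OF has_derivative_mult_right[OF has_derivative_exp[OF has_derivative_mult_right[OF Wd[OF s]]]]])
       (auto simp: g_def fun_eq_iff algebra_simps)
  have gc: "continuous_on (UNIV \<times> S) (\<lambda>(\<theta>, s). g \<theta> s)"
    unfolding g_def split_beta
    by (auto intro!: continuous_intros cont_p1 Wc_gen DWc_gen)
  have fc: "continuous_on S (\<lambda>s. p1 s * exp (\<beta> * W T \<theta> s))" for \<theta>
    by (auto intro!: continuous_intros p1_cont Wc_S)
  have dZ: "((\<lambda>\<theta>. Z T \<theta>) has_derivative (\<lambda>h. (LINT s:S|lborel. g \<theta> s) \<bullet> h)) (at \<theta>)"
    unfolding Z_def by (rule sint_param_deriv[OF S_compact fd gc fc])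
  have dln: "((\<lambda>\<theta>. ln (Z T \<theta>)) has_derivative (\<lambda>h. ((LINT s:S|lborel. g \<theta> s) \<bullet> h) * inverse (Z T \<theta>))) (at \<theta>)"
    by (rule has_derivative_ln[OF Z_pos dZ])
  have gcs: "continuous_on S (g \<theta>)"
    using cont2[OF gc, of S "\<lambda>_. \<theta>" "\<lambda>s. s"] by (auto intro!: continuous_intros)
  have eq: "(1 / \<beta>) * (((LINT s:S|lborel. g \<theta> s) \<bullet> h) * inverse (Z T \<theta>))
      = (LINT s:S|lborel. rho_aux \<beta> S p1 p r (\<mu> \<theta>) T 0 s * (DW T \<theta> s \<bullet> h))" for h
  proof -
    have "(LINT s:S|lborel. g \<theta> s) \<bullet> h = (LINT s:S|lborel. g \<theta> s \<bullet> h)"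
      by (rule sint_inner[symmetric]) (auto intro!: sint_cont S_compact gcs)
    also have "\<dots> = (LINT s:S|lborel. (\<beta> * Z T \<theta>) * (rho_aux \<beta> S p1 p r (\<mu> \<theta>) T 0 s * (DW T \<theta> s \<bullet> h)))"
    proof (intro set_lebesgue_integral_cong allI impI)
      show "S \<in> sets lborel" using S_compact by (simp add: borel_compact)
    next
      fix s assume "s \<in> S"
      have "(\<beta> * Z T \<theta>) * (rho_aux \<beta> S p1 p r (\<mu> \<theta>) T 0 s * (DW T \<theta> s \<bullet> h))
          = (\<beta> * Z T \<theta>) * (p1 s * exp (\<beta> * W T \<theta> s) / Z T \<theta> * (DW T \<theta> s \<bullet> h))"
        by (simp only: rho0_eq)
      also have "\<dots> = g \<theta> s \<bullet> h" using Z_pos[of T \<theta>] by (simp add: g_def field_simps)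
      finally show "g \<theta> s \<bullet> h = (\<beta> * Z T \<theta>) * (rho_aux \<beta> S p1 p r (\<mu> \<theta>) T 0 s * (DW T \<theta> s \<bullet> h))" by simp
    qed
    also have "\<dots> = (\<beta> * Z T \<theta>) * (LINT s:S|lborel. rho_aux \<beta> S p1 p r (\<mu> \<theta>) T 0 s * (DW T \<theta> s \<bullet> h))"
      by simp
    finally show ?thesis using beta Z_pos[of T \<theta>] by (simp add: field_simps)
  qed
  show ?thesis
    unfolding J_eq
    by (rule has_derivative_eq_rhs[OF has_derivative_mult_right[OF dln]]) (rule ext, rule eq)
qed


abbreviation rh :: "nat \<Rightarrow> real^'n \<Rightarrow> nat \<Rightarrow> 's \<Rightarrow> real" where
  "rh T \<theta> j \<equiv> rho_aux \<beta> S p1 p r (\<mu> \<theta>) T j"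

lemma Hnz_gen: "fs ` X \<subseteq> S \<Longrightarrow> \<forall>x\<in>X. H k (ft x) (fs x) (fa x) \<noteq> 0"
  using H_nz by auto

lemma K_cont: "continuous_on (S \<times> S) (\<lambda>(s, s'). ptw \<beta> S p r (\<mu> \<theta>) T t s (\<mu> \<theta> s) s')"
  unfolding ptw_eq split_beta
  by (intro continuous_intros cont_p cont_mu Wc_gen Hc_gen Hnz_gen) (auto simp: image_subset_iff)

lemma rho_cont: "continuous_on S (rh T \<theta> j)"
proof (induction j)
  case 0
  have "rh T \<theta> 0 = (\<lambda>s. p1 s * exp (\<beta> * W T \<theta> s) / Z T \<theta>)" by (rule ext) (rule rho0_eq)
  then show ?case using Z_pos[of T \<theta>] by (auto intro!: continuous_intros p1_cont Wc_S)
next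
  case (Suc j)
  have c: "continuous_on (S \<times> S) (\<lambda>(s', s). rh T \<theta> j s * ptw \<beta> S p r (\<mu> \<theta>) T (Suc j) s (\<mu> \<theta> s) s')"
  proof -
    have "continuous_on (S \<times> S) (\<lambda>x. (\<lambda>(s, s'). ptw \<beta> S p r (\<mu> \<theta>) T (Suc j) s (\<mu> \<theta> s) s') (snd x, fst x))"
      by (rule continuous_on_compose2[OF K_cont]) (auto intro!: continuous_intros)
    moreover have "continuous_on (S \<times> S) (\<lambda>x. rh T \<theta> j (snd x))"
      by (rule continuous_on_compose2[OF Suc]) (auto intro!: continuous_intros)
    ultimately show ?thesis unfolding split_beta by (intro continuous_intros) auto
  qed
  show ?case
    unfolding rho_aux.simps by (rule sint_param_cont[OF S_compact c])
qed

lemma DW_rec: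
  assumes s: "s \<in> S" and k: "k < T"
  shows "DW (Suc k) \<theta> s \<bullet> h = Ga k \<theta> s (\<mu> \<theta> s) \<bullet> (D\<mu> \<theta> s *v h)
     + (LINT s':S|lborel. ptw \<beta> S p r (\<mu> \<theta>) T (T - k) s (\<mu> \<theta> s) s' * (DW k \<theta> s' \<bullet> h))"
proof -
  have i: "set_integrable lborel S (\<lambda>s'. (p s (\<mu> \<theta> s) s' * exp (\<beta> * W k \<theta> s')) *\<^sub>R DW k \<theta> s')"
    using s by (auto intro!: sint_cont S_compact continuous_intros pcS Wc_S DWc_gen)
  have "IW k \<theta> s (\<mu> \<theta> s) \<bullet> h = (LINT s':S|lborel. ((p s (\<mu> \<theta> s) s' * exp (\<beta> * W k \<theta> s')) *\<^sub>R DW k \<theta> s') \<bullet> h)"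
    unfolding IW_def by (rule sint_inner[OF i, symmetric])
  also have "\<dots> = (LINT s':S|lborel. p s (\<mu> \<theta> s) s' * exp (\<beta> * W k \<theta> s') * (DW k \<theta> s' \<bullet> h))"
    by simp
  finally have IWh: "IW k \<theta> s (\<mu> \<theta> s) \<bullet> h = \<dots>" .
  have Tk: "T - (T - k) = k" using k by simp
  have "(LINT s':S|lborel. ptw \<beta> S p r (\<mu> \<theta>) T (T - k) s (\<mu> \<theta> s) s' * (DW k \<theta> s' \<bullet> h))
      = (LINT s':S|lborel. (1 / H k \<theta> s (\<mu> \<theta> s)) * (p s (\<mu> \<theta> s) s' * exp (\<beta> * W k \<theta> s') * (DW k \<theta> s' \<bullet> h)))"
    unfolding ptw_eq Tk by (simp add: field_simps)
  also have "\<dots> = (1 / H k \<theta> s (\<mu> \<theta> s)) * (LINT s':S|lborel. p s (\<mu> \<theta> s) s' * exp (\<beta> * W k \<theta> s') * (DW k \<theta> s' \<bullet> h))"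
    by (rule set_integral_mult_right)
  finally have R: "(LINT s':S|lborel. ptw \<beta> S p r (\<mu> \<theta>) T (T - k) s (\<mu> \<theta> s) s' * (DW k \<theta> s' \<bullet> h))
      = (1 / H k \<theta> s (\<mu> \<theta> s)) * (IW k \<theta> s (\<mu> \<theta> s) \<bullet> h)" using IWh by simp
  show ?thesis
    unfolding DW_Suc' R by (simp add: inner_add_left dot_lmul_matrix)
qed


lemma dcS: "continuous_on S (\<lambda>s. DW k \<theta> s \<bullet> h)"
  by (auto intro!: continuous_intros DWc_gen)

lemma cont_mv:
  fixes f :: "'a::topological_space \<Rightarrow> real^'o^'q" and g :: "'a \<Rightarrow> real^'o"
  assumes "continuous_on X f" "continuous_on X g"
  shows "continuous_on X (\<lambda>x. f x *v g x)"
  unfolding matrix_vector_mult_def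
  by (intro continuous_intros assms)

lemma GcS: "continuous_on S (\<lambda>s. Ga k \<theta> s (\<mu> \<theta> s) \<bullet> (D\<mu> \<theta> s *v h))"
  by (auto intro!: continuous_intros Gac_gen cont_mu cont_Dmu cont_mv)

lemma sum_id:
  "j + n = T \<Longrightarrow> (LINT s:S|lborel. rh T \<theta> j s * (DW n \<theta> s \<bullet> h))
     = (\<Sum>t\<in>{Suc j..T}. LINT s:S|lborel. rh T \<theta> (t - 1) s * (Ga (T - t) \<theta> s (\<mu> \<theta> s) \<bullet> (D\<mu> \<theta> s *v h)))"
proof (induction n arbitrary: j)
  case 0
  then show ?case by simp
next
  case (Suc n)
  have nT: "n < T" and Tn: "T - n = Suc j" and TSj: "T - Suc j = n" using Suc.prems by auto
  have IH: "(LINT s:S|lborel. rh T \<theta> (Suc j) s * (DW n \<theta> s \<bullet> h))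
     = (\<Sum>t\<in>{Suc (Suc j)..T}. LINT s:S|lborel. rh T \<theta> (t - 1) s * (Ga (T - t) \<theta> s (\<mu> \<theta> s) \<bullet> (D\<mu> \<theta> s *v h)))"
    using Suc.IH[of "Suc j"] Suc.prems by simp
  define K where "K s s' = ptw \<beta> S p r (\<mu> \<theta>) T (Suc j) s (\<mu> \<theta> s) s'" for s s'
  have Kc: "continuous_on (S \<times> S) (\<lambda>(s, s'). K s s')" unfolding K_def by (rule K_cont)
  have inner_c: "continuous_on S (\<lambda>s. LINT s':S|lborel. K s s' * (DW n \<theta> s' \<bullet> h))"
  proof -
    have "continuous_on (S \<times> S) (\<lambda>(s, s'). K s s' * (DW n \<theta> s' \<bullet> h))"
      using Kc unfolding split_beta by (auto intro!: continuous_intros DWc_gen)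
    then show ?thesis by (rule sint_param_cont[OF S_compact])
  qed
  have "(LINT s:S|lborel. rh T \<theta> j s * (DW (Suc n) \<theta> s \<bullet> h))
      = (LINT s:S|lborel. rh T \<theta> j s * (Ga n \<theta> s (\<mu> \<theta> s) \<bullet> (D\<mu> \<theta> s *v h))
           + rh T \<theta> j s * (LINT s':S|lborel. K s s' * (DW n \<theta> s' \<bullet> h)))"
  proof (intro set_lebesgue_integral_cong allI impI)
    show "S \<in> sets lborel" using S_compact by (simp add: borel_compact)
  next
    fix s assume s: "s \<in> S"
    show "rh T \<theta> j s * (DW (Suc n) \<theta> s \<bullet> h) = rh T \<theta> j s * (Ga n \<theta> s (\<mu> \<theta> s) \<bullet> (D\<mu> \<theta> s *v h))
           + rh T \<theta> j s * (LINT s':S|lborel. K s s' * (DW n \<theta> s' \<bullet> h))"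
      unfolding DW_rec[OF s nT, of \<theta> h] Tn K_def by (simp only: distrib_left)
  qed
  also have "\<dots> = (LINT s:S|lborel. rh T \<theta> j s * (Ga n \<theta> s (\<mu> \<theta> s) \<bullet> (D\<mu> \<theta> s *v h)))
           + (LINT s:S|lborel. rh T \<theta> j s * (LINT s':S|lborel. K s s' * (DW n \<theta> s' \<bullet> h)))"
    by (rule set_integral_add(2))
       (auto intro!: sint_cont S_compact continuous_intros rho_cont GcS inner_c)
  also have "(LINT s:S|lborel. rh T \<theta> j s * (LINT s':S|lborel. K s s' * (DW n \<theta> s' \<bullet> h)))
      = (LINT s':S|lborel. (LINT s:S|lborel. rh T \<theta> j s * K s s') * (DW n \<theta> s' \<bullet> h))"
    by (rule sint_fubini[OF S_compact rho_cont Kc dcS])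
  also have "\<dots> = (LINT s:S|lborel. rh T \<theta> (Suc j) s * (DW n \<theta> s \<bullet> h))"
    by (simp add: K_def)
  also note IH
  also have "{Suc j..T} = insert (Suc j) {Suc (Suc j)..T}" using Suc.prems by auto
  then have "(\<Sum>t\<in>{Suc j..T}. LINT s:S|lborel. rh T \<theta> (t - 1) s * (Ga (T - t) \<theta> s (\<mu> \<theta> s) \<bullet> (D\<mu> \<theta> s *v h)))
     = (LINT s:S|lborel. rh T \<theta> j s * (Ga n \<theta> s (\<mu> \<theta> s) \<bullet> (D\<mu> \<theta> s *v h)))
       + (\<Sum>t\<in>{Suc (Suc j)..T}. LINT s:S|lborel. rh T \<theta> (t - 1) s * (Ga (T - t) \<theta> s (\<mu> \<theta> s) \<bullet> (D\<mu> \<theta> s *v h)))"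
    using TSj by simp
  finally show ?case by simp
qed

end

theorem theorem2:
  fixes \<beta> b L :: real and T :: nat
    and S :: "'s::euclidean_space set"
    and p1 :: "'s \<Rightarrow> real"
    and p :: "'s \<Rightarrow> real^'m \<Rightarrow> 's \<Rightarrow> real"
    and gp :: "'s \<Rightarrow> real^'m \<Rightarrow> 's \<Rightarrow> real^'m"
    and r :: "'s \<Rightarrow> real^'m \<Rightarrow> real"
    and gr :: "'s \<Rightarrow> real^'m \<Rightarrow> real^'m"
    and \<mu> :: "real^'n \<Rightarrow> 's \<Rightarrow> real^'m"
    and D\<mu> :: "real^'n \<Rightarrow> 's \<Rightarrow> real^'n^'m"
    and \<theta> :: "real^'n"
  assumes beta: "\<beta> \<noteq> 0"
    and S_compact: "compact S"
    \<comment> \<open>densities\<close>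
    and p1_nonneg: "\<forall>s\<in>S. 0 \<le> p1 s"
    and p1_int: "(LINT s:S|lborel. p1 s) = 1"
    and p_nonneg: "\<forall>s\<in>S. \<forall>a. \<forall>s'\<in>S. 0 \<le> p s a s'"
    and p_int: "\<forall>s\<in>S. \<forall>a. (LINT s':S|lborel. p s a s') = 1"
    \<comment> \<open>gradients w.r.t. the action / the parameter\<close>
    and gp_deriv: "\<forall>s\<in>S. \<forall>a. \<forall>s'\<in>S. ((\<lambda>a. p s a s') has_derivative (\<lambda>h. gp s a s' \<bullet> h)) (at a)"
    and gr_deriv: "\<forall>s\<in>S. \<forall>a. ((\<lambda>a. r s a) has_derivative (\<lambda>h. gr s a \<bullet> h)) (at a)"
    and D\<mu>_deriv: "\<forall>\<theta>'. \<forall>s\<in>S. ((\<lambda>\<theta>. \<mu> \<theta> s) has_derivative (\<lambda>h. D\<mu> \<theta>' s *v h)) (at \<theta>')"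
    \<comment> \<open>(D1) continuity\<close>
    and p_cont: "continuous_on (S \<times> UNIV \<times> S) (\<lambda>(s, a, s'). p s a s')"
    and gp_cont: "continuous_on (S \<times> UNIV \<times> S) (\<lambda>(s, a, s'). gp s a s')"
    and mu_cont: "continuous_on (UNIV \<times> S) (\<lambda>(\<theta>, s). \<mu> \<theta> s)"
    and D\<mu>_cont: "continuous_on (UNIV \<times> S) (\<lambda>(\<theta>, s). D\<mu> \<theta> s)"
    and r_cont: "continuous_on (S \<times> UNIV) (\<lambda>(s, a). r s a)"
    and gr_cont: "continuous_on (S \<times> UNIV) (\<lambda>(s, a). gr s a)"
    and p1_cont: "continuous_on S p1"
    \<comment> \<open>(D2) bounds\<close>
    and p1_bd: "\<forall>s\<in>S. p1 s < b"
    and p_bd: "\<forall>s\<in>S. \<forall>a. \<forall>s'\<in>S. p s a s' < b"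
    and r_bd: "\<forall>s\<in>S. \<forall>a. \<bar>r s a\<bar> < b"
    and gp_bd: "\<forall>s\<in>S. \<forall>a. \<forall>s'\<in>S. norm (gp s a s') < L"
    and gr_bd: "\<forall>s\<in>S. \<forall>a. norm (gr s a) < L"
  shows "\<exists>G :: nat \<Rightarrow> 's \<Rightarrow> real^'m.
           (\<forall>t\<in>{1..T}. \<forall>s\<in>S.
              ((\<lambda>a. Qsoft \<beta> S p r (\<mu> \<theta>) T t s a) has_derivative (\<lambda>h. G t s \<bullet> h)) (at (\<mu> \<theta> s)))
         \<and> ((\<lambda>\<theta>'. Jbeta \<beta> S p1 p r (\<mu> \<theta>') T) has_derivative
              (\<lambda>h. \<Sum>t\<in>{1..T}. LINT s:S|lborel.
                      rho_star \<beta> S p1 p r (\<mu> \<theta>) T t s * (G t s \<bullet> (D\<mu> \<theta> s *v h)))) (at \<theta>)"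
  proof -
  interpret m: mdp \<beta> b L S p1 p gp r gr \<mu> D\<mu>
    using assms by (simp add: mdp_def)
  show ?thesis
  proof (intro exI[of _ "\<lambda>t s. m.Ga (T - t) \<theta> s (\<mu> \<theta> s)"] conjI ballI)
    fix t s assume "t \<in> {1..T}" "s \<in> S"
    show "((\<lambda>a. Qsoft \<beta> S p r (\<mu> \<theta>) T t s a) has_derivative (\<lambda>h. m.Ga (T - t) \<theta> s (\<mu> \<theta> s) \<bullet> h)) (at (\<mu> \<theta> s))"
      by (rule m.Q_deriv) fact
  next
    show "((\<lambda>\<theta>'. Jbeta \<beta> S p1 p r (\<mu> \<theta>') T) has_derivative
              (\<lambda>h. \<Sum>t\<in>{1..T}. LINT s:S|lborel.
                      rho_star \<beta> S p1 p r (\<mu> \<theta>) T t s * (m.Ga (T - t) \<theta> s (\<mu> \<theta> s) \<bullet> (D\<mu> \<theta> s *v h)))) (at \<theta>)"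
    proof (rule has_derivative_eq_rhs[OF m.J_deriv], rule ext)
      fix h
      show "(LINT s:S|lborel. rho_aux \<beta> S p1 p r (\<mu> \<theta>) T 0 s * (m.DW T \<theta> s \<bullet> h)) =
         (\<Sum>t\<in>{1..T}. LINT s:S|lborel.
                      rho_star \<beta> S p1 p r (\<mu> \<theta>) T t s * (m.Ga (T - t) \<theta> s (\<mu> \<theta> s) \<bullet> (D\<mu> \<theta> s *v h)))"
        using m.sum_id[of 0 T T \<theta> h] by (simp add: rho_star_def)
    qed
  qed
qed

end
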